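(* For every $n\ge0$, $$P_n=\sum_{m=0}^{\lfloor n/2\rfloor}\frac{q^{-m(2m+1-2\delta_{n\equiv t})}}{(1-q^{-4})(1-q^{-8})\cdots(1-q^{-4m})}\Delta_{n-2m},\qquad \Delta_n=\sum_{m=0}^{\lfloor n/2\rfloor}(-1)^m\frac{q^{-m(2\delta_{n\not\equiv t}+1)}}{(1-q^{-4})(1-q^{-8})\cdots(1-q^{-4m})}P_{n-2m}.$$
   Context: Fix $t\in\{0,1\}$. Let $\mathbf U^\imath_t=\mathbb Q(q)[B]$ be the polynomial algebra in $B$ over $\mathbb Q(q)$, $[n]=(q^n-q^{-n})/(q-q^{-1})$, $[n]!=[1]\cdots[n]$; $\delta_{n\equiv t}$ is $1$ if $n\equiv t\pmod2$ and $0$ otherwise, and $\delta_{n\not\equiv t}=1-\delta_{n\equiv t}$. The PBW basis $\Delta_n$ is defined by $\Delta_0=1$, $B\Delta_n=[n+1]\Delta_{n+1}+\frac{q^{n-1}}{1-q^{-2}}\Delta_{n-1}$ ($\Delta_{-1}=0$). The $\imath$-canonical basis is $P_n=\frac{B^{\sigma_t(n)}}{[n]!}\prod_{0\le k\le n-1,\ k\equiv t\ (2)}(B^2-[k]^2)$, where $\sigma_t(n)=0$ for $n$ even, $-1$ for $n$ odd and $t=0$, $1$ for $n$ odd and $t=1$ (when $\sigma_t(n)=-1$ the product contains the factor $B^2$, so $P_n$ is a polynomial). *)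

theory Defs
  imports "HOL-Computational_Algebra.Polynomial" "HOL-Computational_Algebra.Fraction_Field"
begin

type_synonym Qq = "rat poly fract"

definition qv :: Qq where "qv = Fract [:0, 1:] 1"

definition qint :: "nat \<Rightarrow> Qq" where
  "qint n = (qv ^ n - qv powi (- int n)) / (qv - inverse qv)"

definition qfact :: "nat \<Rightarrow> Qq" where
  "qfact n = (\<Prod>k\<in>{1..n}. qint k)"

text \<open>The generator B of U^i_t = Q(q)[B].\<close>
definition BB :: "Qq poly" where "BB = [:0, 1:]"

text \<open>PBW basis: Delta_0 = 1, Delta_{-1} = 0,
  B Delta_n = [n+1] Delta_{n+1} + q^{n-1}/(1-q^{-2}) Delta_{n-1}.\<close>
fun Delta :: "nat \<Rightarrow> Qq poly" where
  "Delta 0 = 1"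
| "Delta (Suc 0) = smult (inverse (qint 1)) (BB * Delta 0)"
| "Delta (Suc (Suc n)) = smult (inverse (qint (n + 2)))
      (BB * Delta (Suc n) - smult (qv ^ n / (1 - qv powi (-2))) (Delta n))"

definition Pprod :: "nat \<Rightarrow> nat \<Rightarrow> Qq poly" where
  "Pprod t n = (\<Prod>k\<in>{k. k < n \<and> k mod 2 = t}. BB ^ 2 - [:qint k ^ 2:])"

text \<open>i-canonical basis P_n = B^{sigma_t(n)}/[n]! * product; for sigma = -1 the product
  contains the factor B^2 (k = 0), and B^{-1} * product is the exact quotient by B.\<close>
definition Pcan :: "nat \<Rightarrow> nat \<Rightarrow> Qq poly" where
  "Pcan t n = smult (inverse (qfact n))
     (if even n then Pprod t n
      else if t = 0 then Pprod t n div BB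
      else BB * Pprod t n)"

definition qpoch4 :: "nat \<Rightarrow> Qq" where
  "qpoch4 m = (\<Prod>j\<in>{1..m}. 1 - qv powi (- 4 * int j))"

definition delta_eq :: "nat \<Rightarrow> nat \<Rightarrow> int" where
  "delta_eq t n = (if n mod 2 = t mod 2 then 1 else 0)"

end

theory Submission
  imports Defs
begin

lemma qv_pow: "qv ^ k = Fract ([:0,1:] ^ k) 1"
  by (induction k) (simp_all add: qv_def One_fract_def)

lemma qv_ne0: "qv \<noteq> 0"
  by (simp add: qv_def eq_fract Zero_fract_def)

lemma qv_pow_ne1: "k > 0 \<Longrightarrow> qv ^ k \<noteq> 1"
proof
  assume "k > 0" "qv ^ k = 1"
  then have "Fraction_Field.Fract ([:0,1:] ^ k) 1 = Fraction_Field.Fract (1::rat poly) 1" by (simp add: qv_pow One_fract_def)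
  then have "([:0,1:] ^ k :: rat poly) = 1" by (simp add: eq_fract)
  then have "degree ([:0,1:] ^ k :: rat poly) = 0" by simp
  then show False using \<open>k>0\<close> by (simp add: degree_power_eq)
qed

definition qi :: "int \<Rightarrow> Qq" where
  "qi k = (qv powi k - qv powi (- k)) / (qv - inverse qv)"
definition cc :: "int \<Rightarrow> Qq" where
  "cc k = qv powi (k - 1) / (1 - qv powi (-2))"
definition Acoef :: "int \<Rightarrow> nat \<Rightarrow> Qq" where
  "Acoef e m = qv powi (- (int m * (2 * int m + 1 - 2 * e))) / qpoch4 m"
definition Bcoef :: "int \<Rightarrow> nat \<Rightarrow> Qq" where
  "Bcoef e m = (-1) ^ m * qv powi (- (int m * (2 * (1 - e) + 1))) / qpoch4 m"

lemma pw: "a = int p - int r \<Longrightarrow> qv powi a = qv ^ p / qv ^ r"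
  using qv_ne0 by (simp add: power_int_diff)

lemma qpoch4_Suc: "qpoch4 (Suc j) = qpoch4 j * (1 - qv powi (- 4 * int (Suc j)))"
  unfolding qpoch4_def by (simp add: mult.commute)

lemma Acoef_Suc: "Acoef e (Suc j) = Acoef e j * qv powi (-(4 * int j + 3 - 2 * e)) / (1 - qv powi (- 4 * int (Suc j)))"
proof -
  have "- (int (Suc j) * (2 * int (Suc j) + 1 - 2 * e)) = - (int j * (2 * int j + 1 - 2 * e)) + (-(4 * int j + 3 - 2 * e))"
    by (simp add: algebra_simps)
  then have "qv powi (- (int (Suc j) * (2 * int (Suc j) + 1 - 2 * e))) = qv powi (- (int j * (2 * int j + 1 - 2 * e))) * qv powi (-(4 * int j + 3 - 2 * e))"
    by (simp only: power_int_add qv_ne0 simp_thms)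
  then show ?thesis unfolding Acoef_def qpoch4_Suc by simp
qed

lemma Acoef_flip: "Acoef (1 - e) j = Acoef e j * qv powi (int j * (2 - 4 * e))"
proof -
  have "- (int j * (2 * int j + 1 - 2 * (1 - e))) = - (int j * (2 * int j + 1 - 2 * e)) + int j * (2 - 4 * e)"
    by (simp add: algebra_simps)
  then have "qv powi (- (int j * (2 * int j + 1 - 2 * (1 - e)))) = qv powi (- (int j * (2 * int j + 1 - 2 * e))) * qv powi (int j * (2 - 4 * e))"
    by (simp only: power_int_add qv_ne0 simp_thms)
  then show ?thesis unfolding Acoef_def by simp
qed

lemma I1_0: "Acoef 0 (Suc j) * qi (int n + 1 - 2*int (Suc j)) + Acoef 0 j * cc (int n - 2*int j)
   = qi (int n+1) * Acoef 1 (Suc j)"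
proof -
  have f: "Acoef 1 (Suc j) = Acoef 0 (Suc j) * qv powi (int (Suc j) * 2)"
    using Acoef_flip[of 0 "Suc j"] by simp
  have e1: "qv powi (int n + 1 - 2*int (Suc j)) = qv^n / ((qv^j)^2 * qv)"
    by (subst pw[where p=n and r="j*2+1"]) (auto simp: power_mult)
  have e2: "qv powi (-(int n + 1 - 2*int (Suc j))) = ((qv^j)^2 * qv) / qv^n"
    by (subst pw[where r=n and p="j*2+1"]) (auto simp: power_mult)
  have e3: "qv powi (int n - 2*int j - 1) = qv^n / ((qv^j)^2 * qv)"
    by (subst pw[where p=n and r="j*2+1"]) (auto simp: power_mult)
  have e4: "qv powi (-(4 * int j + 3 - 2 * 0)) = 1 / ((qv^j)^4 * qv^3)"
    by (subst pw[where p=0 and r="j*4+3"]) (auto simp: power_mult power_add)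
  have e5: "qv powi (- 4 * int (Suc j)) = 1 / ((qv^j)^4 * qv^4)"
    by (subst pw[where p=0 and r="j*4+4"]) (auto simp: power_mult power_add)
  have e6: "qv powi (int (Suc j) * 2) = (qv^j)^2 * qv^2"
    by (subst pw[where p="j*2+2" and r=0]) (auto simp: power_mult power_add power2_eq_square)
  have e7: "qv powi (int n + 1) = qv^n * qv" by (subst pw[where p="n+1" and r=0]) auto
  have e8: "qv powi (-(int n + 1)) = 1 / (qv^n * qv)" by (subst pw[where p=0 and r="n+1"]) auto
  have e9: "qv powi (-2) = 1 / qv^2" by (subst pw[where p=0 and r="2"]) auto
  have ne: "qv^n \<noteq> 0" "qv^j \<noteq> 0" "qv \<noteq> 0" using qv_ne0 by auto
  have ne2: "qv^2 \<noteq> 1" using qv_pow_ne1[of 2] by simp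
  have ne3: "qv^4 * (qv^j)^4 \<noteq> 1" using qv_pow_ne1[of "j*4+4"] by (simp add: power_add power_mult mult.commute)
  have ne4: "qv - inverse qv \<noteq> 0" "1 - 1 / qv^2 \<noteq> 0" "1 - 1 / ((qv^j)^4 * qv^4) \<noteq> 0"
    using ne ne2 ne3 by (auto simp: field_simps power2_eq_square mult.commute)
  define X where "X = qv^n"
  define Y where "Y = qv^j"
  define s where "s = qv - inverse qv"
  define w where "w = 1 - 1 / qv^2"
  define W where "W = 1 - 1 / (Y^4 * qv^4)"
  have hs: "s * qv = qv^2 - 1" unfolding s_def using ne by (simp add: field_simps power2_eq_square)
  have hw: "w * qv^2 = qv^2 - 1" unfolding w_def using ne by (simp add: field_simps)
  have hW: "W * (Y^4 * qv^4) = Y^4 * qv^4 - 1" unfolding W_def Y_def using ne by (simp add: field_simps)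
  show ?thesis
    unfolding f Acoef_Suc[of 0 j] qi_def cc_def e1 e2 e3 e4 e5 e6 e7 e8 e9
    unfolding X_def[symmetric] Y_def[symmetric] s_def[symmetric] w_def[symmetric] W_def[symmetric]
    using ne ne4 unfolding X_def[symmetric] Y_def[symmetric] s_def[symmetric] w_def[symmetric] W_def[symmetric]
    apply (simp add: field_simps)
    using hs hw hW apply algebra
    done
qed

lemma Bcoef_Suc: "Bcoef e (Suc j) = - Bcoef e j * qv powi (-(2 * (1 - e) + 1)) / (1 - qv powi (- 4 * int (Suc j)))"
proof -
  have "- (int (Suc j) * (2 * (1 - e) + 1)) = - (int j * (2 * (1 - e) + 1)) + (-(2 * (1 - e) + 1))"
    by (simp add: algebra_simps)
  then have "qv powi (- (int (Suc j) * (2 * (1 - e) + 1))) = qv powi (- (int j * (2 * (1 - e) + 1))) * qv powi (-(2 * (1 - e) + 1))"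
    by (simp only: power_int_add qv_ne0 simp_thms)
  then show ?thesis unfolding Bcoef_def qpoch4_Suc by simp
qed

lemma Bcoef_flip: "Bcoef (1 - e) j = Bcoef e j * qv powi (int j * (2 - 4 * e))"
proof -
  have "- (int j * (2 * (1 - (1 - e)) + 1)) = - (int j * (2 * (1 - e) + 1)) + int j * (2 - 4 * e)"
    by (simp add: algebra_simps)
  then have "qv powi (- (int j * (2 * (1 - (1 - e)) + 1))) = qv powi (- (int j * (2 * (1 - e) + 1))) * qv powi (int j * (2 - 4 * e))"
    by (simp only: power_int_add qv_ne0 simp_thms)
  then show ?thesis unfolding Bcoef_def by simp
qed

lemma I1_1: "Acoef 1 (Suc j) * qi (int n + 1 - 2*int (Suc j)) + Acoef 1 j * cc (int n - 2*int j)
   = qi (int n+1) * Acoef 0 (Suc j) + qi (int n) * Acoef 0 j"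
proof -
  have f1: "Acoef 0 (Suc j) = Acoef 1 (Suc j) * qv powi (int (Suc j) * (2 - 4 * 1))"
    using Acoef_flip[of 1 "Suc j"] by simp
  have f2: "Acoef 0 j = Acoef 1 j * qv powi (int j * (2 - 4 * 1))"
    using Acoef_flip[of 1 j] by simp
  have e3: "qv powi (int n - 2*int j - 1) = qv^n / ((qv^j)^2 * qv)"
    by (subst pw[where p=n and r="j*2+1"]) (auto simp: power_mult)
  have e4: "qv powi (-(4 * int j + 3 - 2 * 1)) = 1 / ((qv^j)^4 * qv)"
    by (subst pw[where p=0 and r="j*4+1"]) (auto simp: power_mult power_add)
  have e6: "qv powi (int (Suc j) * (2 - 4 * 1)) = 1 / ((qv^j)^2 * qv^2)"
    by (subst pw[where p=0 and r="j*2+2"]) (auto simp: power_mult power_add power2_eq_square)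
  have e6': "qv powi (int j * (2 - 4 * 1)) = 1 / (qv^j)^2"
    by (subst pw[where p=0 and r="j*2"]) (auto simp: power_mult)
  have e1: "qv powi (int n + 1 - 2*int (Suc j)) = qv^n / ((qv^j)^2 * qv)"
    by (subst pw[where p=n and r="j*2+1"]) (auto simp: power_mult)
  have e2: "qv powi (-(int n + 1 - 2*int (Suc j))) = ((qv^j)^2 * qv) / qv^n"
    by (subst pw[where r=n and p="j*2+1"]) (auto simp: power_mult)
  have e5: "qv powi (- 4 * int (Suc j)) = 1 / ((qv^j)^4 * qv^4)"
    by (subst pw[where p=0 and r="j*4+4"]) (auto simp: power_mult power_add)
  have e7: "qv powi (int n + 1) = qv^n * qv" by (subst pw[where p="n+1" and r=0]) auto
  have e8: "qv powi (-(int n + 1)) = 1 / (qv^n * qv)" by (subst pw[where p=0 and r="n+1"]) auto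
  have e9: "qv powi (-2) = 1 / qv^2" by (subst pw[where p=0 and r="2"]) auto
  have e10: "qv powi (int n) = qv^n" by simp
  have e11: "qv powi (- int n) = 1 / qv^n" by (subst pw[where p=0 and r="n"]) auto
  have e12: "qv powi (int n - 2*int j) = qv^n / (qv^j)^2"
    by (subst pw[where p=n and r="j*2"]) (auto simp: power_mult)
  have e13: "qv powi (-(int n - 2*int j)) = (qv^j)^2 / qv^n"
    by (subst pw[where r=n and p="j*2"]) (auto simp: power_mult)
  have e14: "qv powi (int n - 1) = qv^n / qv" by (subst pw[where p=n and r=1]) auto
  have ne: "qv^n \<noteq> 0" "qv^j \<noteq> 0" "qv \<noteq> 0" using qv_ne0 by auto
  have ne2: "qv^2 \<noteq> 1" using qv_pow_ne1[of 2] by simp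
  have ne3: "qv^4 * (qv^j)^4 \<noteq> 1" using qv_pow_ne1[of "j*4+4"] by (simp add: power_add power_mult mult.commute)
  have ne4: "qv - inverse qv \<noteq> 0" "1 - 1 / qv^2 \<noteq> 0" "1 - 1 / ((qv^j)^4 * qv^4) \<noteq> 0"
    using ne ne2 ne3 by (auto simp: field_simps power2_eq_square mult.commute)
  define X where "X = qv^n"
  define Y where "Y = qv^j"
  define s where "s = qv - inverse qv"
  define w where "w = 1 - 1 / qv^2"
  define W where "W = 1 - 1 / (Y^4 * qv^4)"
  have hs: "s * qv = qv^2 - 1" unfolding s_def using ne by (simp add: field_simps power2_eq_square)
  have hw: "w * qv^2 = qv^2 - 1" unfolding w_def using ne by (simp add: field_simps)
  have hW: "W * (Y^4 * qv^4) = Y^4 * qv^4 - 1" unfolding W_def Y_def using ne by (simp add: field_simps)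
  show ?thesis
    unfolding f1 f2 Acoef_Suc[of 1 j] qi_def cc_def e1 e2 e3 e4 e5 e6 e6' e7 e8 e9 e10 e11
    unfolding X_def[symmetric] Y_def[symmetric] s_def[symmetric] w_def[symmetric] W_def[symmetric]
    using ne ne4 unfolding X_def[symmetric] Y_def[symmetric] s_def[symmetric] w_def[symmetric] W_def[symmetric]
    apply (simp add: field_simps)
    using hs hw hW apply algebra
    done
qed

lemma I2_0: "Bcoef 0 (Suc j) * qi (int n + 1 - 2*int (Suc j))
   = qi (int n+1) * Bcoef 1 (Suc j) + cc (int n) * Bcoef 1 j"
proof -
  have f1: "Bcoef 1 (Suc j) = Bcoef 0 (Suc j) * qv powi (int (Suc j) * (2 - 4 * 0))"
    using Bcoef_flip[of 0 "Suc j"] by simp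
  have f2: "Bcoef 1 j = Bcoef 0 j * qv powi (int j * (2 - 4 * 0))"
    using Bcoef_flip[of 0 j] by simp
  have e4: "qv powi (-(2 * (1 - 0) + 1)) = 1 / qv^3"
    by (subst pw[where p=0 and r="3"]) auto
  have e6: "qv powi (int (Suc j) * (2 - 4 * 0)) = (qv^j)^2 * qv^2"
    by (subst pw[where r=0 and p="j*2+2"]) (auto simp: power_mult power_add power2_eq_square)
  have e6': "qv powi (int j * (2 - 4 * 0)) = (qv^j)^2"
    by (subst pw[where r=0 and p="j*2"]) (auto simp: power_mult)
  have e1: "qv powi (int n + 1 - 2*int (Suc j)) = qv^n / ((qv^j)^2 * qv)"
    by (subst pw[where p=n and r="j*2+1"]) (auto simp: power_mult)
  have e2: "qv powi (-(int n + 1 - 2*int (Suc j))) = ((qv^j)^2 * qv) / qv^n"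
    by (subst pw[where r=n and p="j*2+1"]) (auto simp: power_mult)
  have e5: "qv powi (- 4 * int (Suc j)) = 1 / ((qv^j)^4 * qv^4)"
    by (subst pw[where p=0 and r="j*4+4"]) (auto simp: power_mult power_add)
  have e7: "qv powi (int n + 1) = qv^n * qv" by (subst pw[where p="n+1" and r=0]) auto
  have e8: "qv powi (-(int n + 1)) = 1 / (qv^n * qv)" by (subst pw[where p=0 and r="n+1"]) auto
  have e9: "qv powi (-2) = 1 / qv^2" by (subst pw[where p=0 and r="2"]) auto
  have e10: "qv powi (int n) = qv^n" by simp
  have e11: "qv powi (- int n) = 1 / qv^n" by (subst pw[where p=0 and r="n"]) auto
  have e12: "qv powi (int n - 2*int j) = qv^n / (qv^j)^2"
    by (subst pw[where p=n and r="j*2"]) (auto simp: power_mult)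
  have e13: "qv powi (-(int n - 2*int j)) = (qv^j)^2 / qv^n"
    by (subst pw[where r=n and p="j*2"]) (auto simp: power_mult)
  have e14: "qv powi (int n - 1) = qv^n / qv" by (subst pw[where p=n and r=1]) auto
  have ne: "qv^n \<noteq> 0" "qv^j \<noteq> 0" "qv \<noteq> 0" using qv_ne0 by auto
  have ne2: "qv^2 \<noteq> 1" using qv_pow_ne1[of 2] by simp
  have ne3: "qv^4 * (qv^j)^4 \<noteq> 1" using qv_pow_ne1[of "j*4+4"] by (simp add: power_add power_mult mult.commute)
  have ne4: "qv - inverse qv \<noteq> 0" "1 - 1 / qv^2 \<noteq> 0" "1 - 1 / ((qv^j)^4 * qv^4) \<noteq> 0"
    using ne ne2 ne3 by (auto simp: field_simps power2_eq_square mult.commute)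
  define X where "X = qv^n"
  define Y where "Y = qv^j"
  define s where "s = qv - inverse qv"
  define w where "w = 1 - 1 / qv^2"
  define W where "W = 1 - 1 / (Y^4 * qv^4)"
  have hs: "s * qv = qv^2 - 1" unfolding s_def using ne by (simp add: field_simps power2_eq_square)
  have hw: "w * qv^2 = qv^2 - 1" unfolding w_def using ne by (simp add: field_simps)
  have hW: "W * (Y^4 * qv^4) = Y^4 * qv^4 - 1" unfolding W_def Y_def using ne by (simp add: field_simps)
  show ?thesis
    unfolding f1 f2 Bcoef_Suc[of 0 j] qi_def cc_def e1 e2 e4 e5 e6 e6' e7 e8 e9 e10 e11 e14
    unfolding X_def[symmetric] Y_def[symmetric] s_def[symmetric] w_def[symmetric] W_def[symmetric]
    using ne ne4 unfolding X_def[symmetric] Y_def[symmetric] s_def[symmetric] w_def[symmetric] W_def[symmetric]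
    apply (simp add: field_simps)
    using hs hw hW apply algebra
    done
qed

lemma I2_1: "Bcoef 1 (Suc j) * qi (int n + 1 - 2*int (Suc j)) + Bcoef 1 j * qi (int n - 2 * int j)
   = qi (int n+1) * Bcoef 0 (Suc j) + cc (int n) * Bcoef 0 j"
proof -
  have f1: "Bcoef 0 (Suc j) = Bcoef 1 (Suc j) * qv powi (int (Suc j) * (2 - 4 * 1))"
    using Bcoef_flip[of 1 "Suc j"] by simp
  have f2: "Bcoef 0 j = Bcoef 1 j * qv powi (int j * (2 - 4 * 1))"
    using Bcoef_flip[of 1 j] by simp
  have e4: "qv powi (-(2 * (1 - 1) + 1)) = 1 / qv"
    by (subst pw[where p=0 and r="1"]) auto
  have e6: "qv powi (int (Suc j) * (2 - 4 * 1)) = 1 / ((qv^j)^2 * qv^2)"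
    by (subst pw[where p=0 and r="j*2+2"]) (auto simp: power_mult power_add power2_eq_square)
  have e6': "qv powi (int j * (2 - 4 * 1)) = 1 / (qv^j)^2"
    by (subst pw[where p=0 and r="j*2"]) (auto simp: power_mult)
  have e1: "qv powi (int n + 1 - 2*int (Suc j)) = qv^n / ((qv^j)^2 * qv)"
    by (subst pw[where p=n and r="j*2+1"]) (auto simp: power_mult)
  have e2: "qv powi (-(int n + 1 - 2*int (Suc j))) = ((qv^j)^2 * qv) / qv^n"
    by (subst pw[where r=n and p="j*2+1"]) (auto simp: power_mult)
  have e5: "qv powi (- 4 * int (Suc j)) = 1 / ((qv^j)^4 * qv^4)"
    by (subst pw[where p=0 and r="j*4+4"]) (auto simp: power_mult power_add)
  have e7: "qv powi (int n + 1) = qv^n * qv" by (subst pw[where p="n+1" and r=0]) auto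
  have e8: "qv powi (-(int n + 1)) = 1 / (qv^n * qv)" by (subst pw[where p=0 and r="n+1"]) auto
  have e9: "qv powi (-2) = 1 / qv^2" by (subst pw[where p=0 and r="2"]) auto
  have e10: "qv powi (int n) = qv^n" by simp
  have e11: "qv powi (- int n) = 1 / qv^n" by (subst pw[where p=0 and r="n"]) auto
  have e12: "qv powi (int n - 2*int j) = qv^n / (qv^j)^2"
    by (subst pw[where p=n and r="j*2"]) (auto simp: power_mult)
  have e13: "qv powi (-(int n - 2*int j)) = (qv^j)^2 / qv^n"
    by (subst pw[where r=n and p="j*2"]) (auto simp: power_mult)
  have e14: "qv powi (int n - 1) = qv^n / qv" by (subst pw[where p=n and r=1]) auto
  have ne: "qv^n \<noteq> 0" "qv^j \<noteq> 0" "qv \<noteq> 0" using qv_ne0 by auto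
  have ne2: "qv^2 \<noteq> 1" using qv_pow_ne1[of 2] by simp
  have ne3: "qv^4 * (qv^j)^4 \<noteq> 1" using qv_pow_ne1[of "j*4+4"] by (simp add: power_add power_mult mult.commute)
  have ne4: "qv - inverse qv \<noteq> 0" "1 - 1 / qv^2 \<noteq> 0" "1 - 1 / ((qv^j)^4 * qv^4) \<noteq> 0"
    using ne ne2 ne3 by (auto simp: field_simps power2_eq_square mult.commute)
  define X where "X = qv^n"
  define Y where "Y = qv^j"
  define s where "s = qv - inverse qv"
  define w where "w = 1 - 1 / qv^2"
  define W where "W = 1 - 1 / (Y^4 * qv^4)"
  have hs: "s * qv = qv^2 - 1" unfolding s_def using ne by (simp add: field_simps power2_eq_square)
  have hw: "w * qv^2 = qv^2 - 1" unfolding w_def using ne by (simp add: field_simps)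
  have hW: "W * (Y^4 * qv^4) = Y^4 * qv^4 - 1" unfolding W_def Y_def using ne by (simp add: field_simps)
  show ?thesis
    unfolding f1 f2 Bcoef_Suc[of 1 j] qi_def cc_def e1 e2 e4 e5 e6 e6' e7 e8 e9 e10 e11 e12 e13 e14
    unfolding X_def[symmetric] Y_def[symmetric] s_def[symmetric] w_def[symmetric] W_def[symmetric]
    using ne ne4 unfolding X_def[symmetric] Y_def[symmetric] s_def[symmetric] w_def[symmetric] W_def[symmetric]
    apply (simp add: field_simps)
    using hs hw hW apply algebra
    done
qed

lemma smult_sum_right: "smult c (sum f A) = (\<Sum>i\<in>A. smult c (f i))"
  by (induction A rule: infinite_finite_induct) (simp_all add: smult_add_right)

lemma shift_rec:
  fixes f :: "int \<Rightarrow> Qq poly" and a b :: "nat \<Rightarrow> Qq" and u v :: "int \<Rightarrow> Qq"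
  assumes f_neg: "\<And>k. k < 0 \<Longrightarrow> f k = 0"
    and frec: "\<And>k. BB * f k = smult (u k) (f (k+1)) + smult (v k) (f (k-1))"
    and coef: "\<And>m. a m * u (int N - 2*int m) + (if m=0 then 0 else a (m-1) * v (int N - 2*int (m-1)))
                   = lam * b m + (if m=0 then 0 else mu * b (m-1))"
  shows "BB * (\<Sum>m<N+1. smult (a m) (f (int N - 2*int m)))
       = smult lam (\<Sum>m<N+2. smult (b m) (f (int N + 1 - 2*int m)))
         + smult mu (\<Sum>m<N. smult (b m) (f (int N - 1 - 2*int m)))"
proof -
  define g where "g m = f (int N + 1 - 2 * int m)" for m
  have g0: "g (N+1) = 0" unfolding g_def by (rule f_neg) simp
  have ga: "f (int N - 2*int m + 1) = g m" for m unfolding g_def by (rule arg_cong[where f=f]) simp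
  have gb: "f (int N - 2*int m - 1) = g (Suc m)" for m unfolding g_def by (rule arg_cong[where f=f]) simp
  have gc: "f (int N - 1 - 2*int m) = g (Suc m)" for m unfolding g_def by (rule arg_cong[where f=f]) simp
  define al where "al m = a m * u (int N - 2*int m)" for m
  define be where "be m = (if m = 0 then 0 else a (m-1) * v (int N - 2*int (m-1)))" for m
  define de' where "de' m = (if m = 0 then 0 else mu * b (m-1))" for m
  have "BB * (\<Sum>m<N+1. smult (a m) (f (int N - 2*int m)))
      = (\<Sum>m<N+1. smult (a m) (BB * f (int N - 2*int m)))"
    by (simp only: sum_distrib_left mult_smult_right)
  also have "\<dots> = (\<Sum>m<N+1. smult (al m) (g m) + smult (be (Suc m)) (g (Suc m)))"
    by (rule sum.cong) (simp_all add: frec ga gb al_def be_def smult_add_right)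
  also have "\<dots> = (\<Sum>m<N+1. smult (al m) (g m)) + (\<Sum>m<N+1. smult (be (Suc m)) (g (Suc m)))"
    by (rule sum.distrib)
  also have "(\<Sum>m<N+1. smult (al m) (g m)) = (\<Sum>m<N+2. smult (al m) (g m))"
    using g0 by simp
  also have "(\<Sum>m<N+1. smult (be (Suc m)) (g (Suc m))) = (\<Sum>m<N+2. smult (be m) (g m))"
  proof -
    have e: "N+2 = Suc (N+1)" by simp
    show ?thesis unfolding e sum.lessThan_Suc_shift by (simp add: be_def)
  qed
  finally have L: "BB * (\<Sum>m<N+1. smult (a m) (f (int N - 2*int m))) = (\<Sum>m<N+2. smult (al m) (g m)) + (\<Sum>m<N+2. smult (be m) (g m))" .
  have "smult mu (\<Sum>m<N. smult (b m) (f (int N - 1 - 2*int m))) = (\<Sum>m<N. smult (de' (Suc m)) (g (Suc m)))"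
    by (simp add: smult_sum_right gc de'_def)
  also have "\<dots> = (\<Sum>m<N+1. smult (de' m) (g m))"
  proof -
    have e: "N+1 = Suc N" by simp
    show ?thesis unfolding e sum.lessThan_Suc_shift by (simp add: de'_def)
  qed
  also have "\<dots> = (\<Sum>m<N+2. smult (de' m) (g m))"
    using g0 by simp
  finally have M: "smult mu (\<Sum>m<N. smult (b m) (f (int N - 1 - 2*int m))) = (\<Sum>m<N+2. smult (de' m) (g m))" .
  have R: "smult lam (\<Sum>m<N+2. smult (b m) (f (int N + 1 - 2*int m))) = (\<Sum>m<N+2. smult (lam * b m) (g m))"
    by (simp only: smult_sum_right smult_smult g_def)
  have "(\<Sum>m<N+2. smult (al m) (g m)) + (\<Sum>m<N+2. smult (be m) (g m)) = (\<Sum>m<N+2. smult (lam * b m) (g m)) + (\<Sum>m<N+2. smult (de' m) (g m))"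
    unfolding sum.distrib[symmetric] smult_add_left[symmetric]
    by (rule sum.cong) (use coef in \<open>simp_all add: al_def be_def de'_def\<close>)
  then show ?thesis using L M R by simp
qed


lemma qint_qi: "qint n = qi (int n)"
  by (simp add: qint_def qi_def)

lemma qi_0: "qi 0 = 0" by (simp add: qi_def)

lemma qint_0: "qint 0 = 0" by (simp add: qint_def)

lemma qi_ne: "k > 0 \<Longrightarrow> qi (int k) \<noteq> 0"
proof
  assume k: "k > 0" and z: "qi (int k) = 0"
  have ne: "qv \<noteq> 0" "qv^k \<noteq> 0" using qv_ne0 by auto
  have "qv - inverse qv \<noteq> 0"
  proof
    assume "qv - inverse qv = 0"
    then have "qv * qv = 1" using ne by (simp add: field_simps)
    then show False using qv_pow_ne1[of 2] by (simp add: power2_eq_square)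
  qed
  with z have "qv^k - inverse (qv^k) = 0" by (simp add: qi_def power_int_minus)
  then have "qv^k * qv^k = 1" using ne by (simp add: field_simps)
  then have "qv^(2*k) = 1" by (simp add: mult_2 power_add)
  then show False using qv_pow_ne1[of "2*k"] k by simp
qed

lemma qint_ne: "k > 0 \<Longrightarrow> qint k \<noteq> 0"
  using qi_ne qint_qi by simp

lemma qfact_Suc: "qfact (Suc n) = qfact n * qint (Suc n)"
  unfolding qfact_def by simp

lemma qfact_ne: "qfact n \<noteq> 0"
  unfolding qfact_def using qint_ne by (auto simp: prod_zero_iff)

lemma F_Suc: "qint (Suc n) * inverse (qfact (Suc n)) = inverse (qfact n)"
  using qfact_ne[of n] qint_ne[of "Suc n"] by (simp add: qfact_Suc field_simps)

definition D :: "int \<Rightarrow> Qq poly" where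
  "D k = (if k < 0 then 0 else Delta (nat k))"

lemma D_rec: "BB * D k = smult (qi (k+1)) (D (k+1)) + smult (cc k) (D (k-1))"
proof (cases "k < -1")
  case True then show ?thesis by (simp add: D_def)
next
  case False
  then consider "k = -1" | "k = 0" | "k \<ge> 1" by linarith
  then show ?thesis
  proof cases
    case 1 then show ?thesis by (simp add: D_def qi_0)
  next
    case 2
    have "qi 1 \<noteq> 0" using qi_ne[of 1] by simp
    then show ?thesis using 2 by (simp add: D_def qint_qi)
  next
    case k1: 3
    define i where "i = nat (k - 1)"
    have 3: "k = int i + 1" using k1 by (simp add: i_def)
    have q2: "qint (Suc (Suc i)) \<noteq> 0" using qint_ne[of "i+2"] by simp
    have a: "D k = Delta (Suc i)" "D (k+1) = Delta (Suc (Suc i))" "D (k-1) = Delta i"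
      using 3 by (simp_all add: D_def nat_add_distrib)
    have b: "qi (k+1) = qint (Suc (Suc i))" using 3 by (simp add: qint_qi add.assoc add.commute)
    have c: "cc k = qv ^ i / (1 - qv powi - 2)" using 3 by (simp add: cc_def)
    have "smult (qint (Suc (Suc i))) (Delta (Suc (Suc i))) = BB * Delta (Suc i) - smult (qv ^ i / (1 - qv powi - 2)) (Delta i)"
      using q2 by (simp only: Delta.simps smult_smult numeral_2_eq_2 add_Suc_right add_0_right right_inverse smult_1_left) simp
    then show ?thesis unfolding a b c by simp
  qed
qed


lemma Pprod_Suc: "Pprod t (Suc n) = (if n mod 2 = t then Pprod t n * (BB^2 - [:qint n ^ 2:]) else Pprod t n)"
proof -
  let ?S = "{k. k < n \<and> k mod 2 = t}"
  have fin: "finite ?S" by (rule finite_subset[of _ "{..<n}"]) auto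
  show ?thesis
  proof (cases "n mod 2 = t")
    case True
    then have "{k. k < Suc n \<and> k mod 2 = t} = insert n ?S" by auto
    then show ?thesis using True fin by (simp add: Pprod_def mult.commute)
  next
    case False
    then have "{k. k < Suc n \<and> k mod 2 = t} = ?S" using less_Suc_eq by auto
    then show ?thesis using False by (simp add: Pprod_def)
  qed
qed

lemma Pprod_0: "Pprod t 0 = 1" by (simp add: Pprod_def)

lemma BB_dvd: "n \<ge> 1 \<Longrightarrow> BB dvd Pprod 0 n"
proof -
  assume n: "n \<ge> 1"
  let ?S = "{k. k < n \<and> k mod 2 = 0}"
  have fin: "finite ?S" by (rule finite_subset[of _ "{..<n}"]) auto
  have "0 \<in> ?S" using n by auto
  then have "(BB^2 - [:qint 0 ^ 2:]) dvd Pprod 0 n" unfolding Pprod_def using fin by (rule dvd_prodI[rotated])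
  then show ?thesis by (simp add: qint_0) (metis dvd_mult_left power2_eq_square)
qed

lemma BB_ne: "BB \<noteq> 0" by (simp add: BB_def)

lemma qfact_0: "qfact 0 = 1" by (simp add: qfact_def)

lemma Pcan_rec:
  assumes t: "t \<in> {0, 1}"
  shows "BB * Pcan t n = smult (qint (Suc n)) (Pcan t (Suc n))
           + (if n mod 2 = t then smult (qint n) (Pcan t (n - 1)) else 0)"
proof -
  define F where "F k = inverse (qfact k)" for k
  have FS: "qint (Suc k) * F (Suc k) = F k" for k unfolding F_def by (rule F_Suc)
  have FS': "smult (qint (Suc k)) (smult (F (Suc k)) p) = smult (F k) p" for k p
    by (simp add: FS)
  show ?thesis
  proof (cases "t = 1")
    case t1: True
    show ?thesis
    proof (cases "even n")
      case True
      then have "n mod 2 \<noteq> t" using t1 by simp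
      then show ?thesis using True t1
        by (simp add: Pcan_def Pprod_Suc F_def[symmetric] FS FS' mult_smult_right)
    next
      case False
      define m where "m = n - 1"
      have m: "n = Suc m" "even m" using False unfolding m_def by (cases n; simp)+
      define P where "P = Pprod (Suc 0) m"
      have nm: "n mod 2 = Suc 0" using False by presburger
      have Pn: "Pprod (Suc 0) n = P" using m by (simp add: Pprod_Suc P_def)
      have c1: "Pcan 1 n = smult (F n) (BB * P)" using False by (simp add: Pcan_def Pn F_def)
      have c2: "Pcan 1 (Suc n) = smult (F (Suc n)) (P * (BB^2 - [:qint n ^ 2:]))"
        using False nm by (simp add: Pcan_def Pprod_Suc Pn F_def)
      have c3: "Pcan 1 (n - 1) = smult (F n) (smult (qint n) P)"
        using m by (simp add: Pcan_def P_def F_def[symmetric] FS[of m, symmetric] mult.commute)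
      have "BB * Pcan 1 n = smult (F n) (P * (BB^2 - [:qint n ^ 2:]) + smult (qint n * qint n) P)"
        unfolding c1 by (simp add: algebra_simps power2_eq_square mult_smult_right smult_add_right)
      then show ?thesis using nm unfolding t1 c2 c3
        by (simp add: FS FS' smult_add_right power2_eq_square mult_ac)
    qed
  next
    case False
    then have t0: "t = 0" using t by simp
    show ?thesis
    proof (cases "even n")
      case ev: True
      show ?thesis
      proof (cases "n = 0")
        case True
        have "Pprod 0 1 = BB^2" using Pprod_Suc[of 0 0] by (simp add: Pprod_0 qint_0)
        then have "Pcan 0 1 = smult (F 1) BB" by (simp add: Pcan_def F_def power2_eq_square BB_ne)
        then show ?thesis using True t0
          by (simp add: Pcan_def Pprod_0 qfact_0 qint_0 FS'[of 0, simplified] F_def[symmetric])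
            (simp add: F_def qfact_0)
      next
        case False
        define m where "m = n - 1"
        have m: "n = Suc m" "odd m" using False ev unfolding m_def by (cases n; simp)+
        have "m \<ge> 1" using m by (cases m) auto
        then obtain R where R: "Pprod 0 m = BB * R" using BB_dvd[of m] by (auto elim: dvdE)
        have mm: "m mod 2 = Suc 0" "n mod 2 = 0" using m by presburger+
        have Pn: "Pprod 0 n = BB * R" using m R mm by (simp add: Pprod_Suc)
        have c1: "Pcan 0 n = smult (F n) (BB * R)" using ev by (simp add: Pcan_def Pn F_def)
        have c2: "Pcan 0 (Suc n) = smult (F (Suc n)) (R * (BB^2 - [:qint n ^ 2:]))"
          using ev mm by (simp add: Pcan_def Pprod_Suc Pn F_def mult.assoc BB_ne)
        have c3: "Pcan 0 (n - 1) = smult (F n) (smult (qint n) R)"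
          using m by (simp add: Pcan_def R F_def[symmetric] FS[of m, symmetric] BB_ne mult.commute)
        have "BB * Pcan 0 n = smult (F n) (R * (BB^2 - [:qint n ^ 2:]) + smult (qint n * qint n) R)"
          unfolding c1 by (simp add: algebra_simps power2_eq_square mult_smult_right smult_add_right)
        then show ?thesis using mm unfolding t0 c2 c3
          by (simp add: FS FS' smult_add_right power2_eq_square mult_ac)
      qed
    next
      case od: False
      then have "n \<ge> 1" by (cases n) auto
      then obtain R where R: "Pprod 0 n = BB * R" using BB_dvd[of n] by (auto elim: dvdE)
      have c1: "Pcan 0 n = smult (F n) R" using od by (simp add: Pcan_def R F_def BB_ne)
      have nm: "n mod 2 = Suc 0" using od by presburger
      have c2: "Pcan 0 (Suc n) = smult (F (Suc n)) (BB * R)" using od nm by (simp add: Pcan_def Pprod_Suc R F_def)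
      show ?thesis using nm unfolding t0 c1 c2 by (simp add: FS FS' mult_smult_right)
    qed
  qed
qed


definition de :: "nat \<Rightarrow> int \<Rightarrow> int" where
  "de t k = (if k mod 2 = int t then 1 else 0)"

definition PP :: "nat \<Rightarrow> int \<Rightarrow> Qq poly" where
  "PP t k = (if k < 0 then 0 else Pcan t (nat k))"

lemma PP_rec:
  assumes t: "t \<in> {0, 1}"
  shows "BB * PP t k = smult (qi (k+1)) (PP t (k+1)) + smult (of_int (de t k) * qi k) (PP t (k-1))"
proof (cases "k < -1")
  case True then show ?thesis by (simp add: PP_def)
next
  case False
  then consider "k = -1" | "k \<ge> 0" by linarith
  then show ?thesis
  proof cases
    case 1 then show ?thesis by (simp add: PP_def qi_0)
  next
    case 2
    define n where "n = nat k"
    have k: "k = int n" using 2 by (simp add: n_def)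
    have r: "BB * Pcan t n = smult (qint (Suc n)) (Pcan t (Suc n))
           + (if n mod 2 = t then smult (qint n) (Pcan t (n - 1)) else 0)" by (rule Pcan_rec[OF t])
    have a: "PP t k = Pcan t n" "PP t (k+1) = Pcan t (Suc n)" using k by (simp_all add: PP_def nat_add_distrib)
    have b: "qi (k+1) = qint (Suc n)" "qi k = qint n" using k by (simp_all add: qint_qi add.commute)
    have "int n mod 2 = int (n mod 2)" by (simp add: of_nat_mod)
    then have c: "de t k = (if n mod 2 = t then 1 else 0)" using k by (simp add: de_def)
    have d: "smult (qint n) (PP t (k-1)) = smult (qint n) (Pcan t (n - 1))"
    proof (cases "n = 0")
      case True then show ?thesis by (simp add: qint_0)
    next
      case False then show ?thesis using k by (simp add: PP_def nat_diff_distrib)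
    qed
    show ?thesis unfolding a b c using r d by auto
  qed
qed

definition S :: "nat \<Rightarrow> int \<Rightarrow> Qq poly" where
  "S t n = (\<Sum>m<nat (n+1). smult (Acoef (de t n) m) (D (n - 2 * int m)))"

definition T :: "nat \<Rightarrow> int \<Rightarrow> Qq poly" where
  "T t n = (\<Sum>m<nat (n+1). smult (Bcoef (de t n) m) (PP t (n - 2 * int m)))"

lemma Acoef_0: "Acoef e 0 = 1" by (simp add: Acoef_def qpoch4_def)
lemma Bcoef_0: "Bcoef e 0 = 1" by (simp add: Bcoef_def qpoch4_def)

lemma de_01: "de t k = 0 \<or> de t k = 1" by (simp add: de_def)

lemma de_flip: "t \<in> {0,1} \<Longrightarrow> de t (k + 1) = 1 - de t k" "t \<in> {0,1} \<Longrightarrow> de t (k - 1) = 1 - de t k"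
  by (auto simp: de_def) presburger+

lemma de_shift: "de t (k - 2 * int j) = de t k"
proof -
  have "(k - 2 * int j) mod 2 = k mod 2" by presburger
  then show ?thesis by (simp add: de_def)
qed

lemma coefS:
  assumes d: "d = 0 \<or> d = 1"
  shows "Acoef d m * qi (int N - 2*int m + 1) + (if m=0 then 0 else Acoef d (m-1) * cc (int N - 2*int (m-1)))
       = qi (int N + 1) * Acoef (1-d) m + (if m=0 then 0 else (of_int d * qi (int N)) * Acoef (1-d) (m-1))"
proof (cases m)
  case 0 then show ?thesis by (simp add: Acoef_0)
next
  case (Suc j)
  have e: "int N - 2*int (Suc j) + 1 = int N + 1 - 2*int (Suc j)" by simp
  show ?thesis using d unfolding Suc e
    using I1_0[of j N] I1_1[of j N] by (auto simp: mult_ac)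
qed

lemma coefT:
  assumes d: "d = de t (int N)"
  shows "Bcoef d m * qi (int N - 2*int m + 1) + (if m=0 then 0 else Bcoef d (m-1) * (of_int (de t (int N - 2*int (m-1))) * qi (int N - 2*int (m-1))))
       = qi (int N + 1) * Bcoef (1-d) m + (if m=0 then 0 else cc (int N) * Bcoef (1-d) (m-1))"
proof (cases m)
  case 0 then show ?thesis by (simp add: Bcoef_0)
next
  case (Suc j)
  have e: "int N - 2*int (Suc j) + 1 = int N + 1 - 2*int (Suc j)" by simp
  have dd: "de t (int N - 2*int (Suc j - 1)) = d" using d de_shift by simp
  show ?thesis using de_01[of t "int N"] unfolding Suc e dd d[symmetric]
    using I2_0[of j N] I2_1[of j N] by (auto simp: mult_ac)
qed

lemma S_rec:
  assumes t: "t \<in> {0,1}"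
  shows "BB * S t (int N) = smult (qi (int N + 1)) (S t (int N + 1)) + smult (of_int (de t (int N)) * qi (int N)) (S t (int N - 1))"
proof -
  define d where "d = de t (int N)"
  have n: "nat (int N + 1) = N + 1" "nat (int N + 1 + 1) = N + 2" "nat (int N - 1 + 1) = N" by simp_all
  have dS: "de t (int N + 1) = 1 - d" "de t (int N - 1) = 1 - d" using de_flip[OF t] by (simp_all add: d_def)
  have e: "int N - 1 - 2 * int m = int N - 1 - 2 * int m" for m by simp
  have "BB * (\<Sum>m<N+1. smult (Acoef d m) (D (int N - 2*int m)))
       = smult (qi (int N + 1)) (\<Sum>m<N+2. smult (Acoef (1-d) m) (D (int N + 1 - 2*int m)))
         + smult (of_int d * qi (int N)) (\<Sum>m<N. smult (Acoef (1-d) m) (D (int N - 1 - 2*int m)))"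
    by (rule shift_rec[where u="\<lambda>k. qi (k+1)" and v=cc]) (simp_all add: D_def D_rec[unfolded D_def] coefS[OF de_01[of t "int N", folded d_def]])
  then show ?thesis unfolding S_def n dS d_def by simp
qed


lemma T_rec:
  assumes t: "t \<in> {0,1}"
  shows "BB * T t (int N) = smult (qi (int N + 1)) (T t (int N + 1)) + smult (cc (int N)) (T t (int N - 1))"
proof -
  define d where "d = de t (int N)"
  have n: "nat (int N + 1) = N + 1" "nat (int N + 1 + 1) = N + 2" "nat (int N - 1 + 1) = N" by simp_all
  have dS: "de t (int N + 1) = 1 - d" "de t (int N - 1) = 1 - d" using de_flip[OF t] by (simp_all add: d_def)
  have "BB * (\<Sum>m<N+1. smult (Bcoef d m) (PP t (int N - 2*int m)))
       = smult (qi (int N + 1)) (\<Sum>m<N+2. smult (Bcoef (1-d) m) (PP t (int N + 1 - 2*int m)))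
         + smult (cc (int N)) (\<Sum>m<N. smult (Bcoef (1-d) m) (PP t (int N - 1 - 2*int m)))"
    by (rule shift_rec[where u="\<lambda>k. qi (k+1)" and v="\<lambda>k. of_int (de t k) * qi k"])
       (simp_all add: PP_def PP_rec[OF t, unfolded PP_def] coefT[OF d_def])
  then show ?thesis unfolding T_def n dS d_def by simp
qed

lemma uniq:
  fixes f g :: "int \<Rightarrow> Qq poly"
  assumes m1: "f (-1) = g (-1)" and z: "f 0 = g 0"
    and rf: "\<And>N. BB * f (int N) = smult (lam N) (f (int N + 1)) + smult (mu N) (f (int N - 1))"
    and rg: "\<And>N. BB * g (int N) = smult (lam N) (g (int N + 1)) + smult (mu N) (g (int N - 1))"
    and nz: "\<And>N. lam N \<noteq> 0"
  shows "f (int N) = g (int N)"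
proof -
  have "f (int N - 1) = g (int N - 1) \<and> f (int N) = g (int N)"
  proof (induction N)
    case 0 then show ?case using m1 z by simp
  next
    case (Suc N)
    then have a: "f (int N - 1) = g (int N - 1)" "f (int N) = g (int N)" by auto
    have "smult (lam N) (f (int N + 1)) = smult (lam N) (g (int N + 1))"
      using rf[of N] rg[of N] a by (metis add_diff_cancel_right')
    then have "smult (inverse (lam N)) (smult (lam N) (f (int N + 1))) = smult (inverse (lam N)) (smult (lam N) (g (int N + 1)))"
      by simp
    then have "f (int N + 1) = g (int N + 1)" using nz[of N] by simp
    then show ?case using a by (simp add: add.commute)
  qed
  then show ?thesis by simp
qed

lemma S_eq:
  assumes t: "t \<in> {0,1}"
  shows "S t (int N) = PP t (int N)"
proof (rule uniq[where lam="\<lambda>N. qi (int N + 1)" and mu="\<lambda>N. of_int (de t (int N)) * qi (int N)"])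
  show "S t (-1) = PP t (-1)" by (simp add: S_def PP_def)
  show "S t 0 = PP t 0" by (simp add: S_def PP_def D_def Acoef_0 Pcan_def Pprod_0 qfact_0)
  show "BB * S t (int N) = smult (qi (int N + 1)) (S t (int N + 1)) + smult (of_int (de t (int N)) * qi (int N)) (S t (int N - 1))" for N
    by (rule S_rec[OF t])
  show "BB * PP t (int N) = smult (qi (int N + 1)) (PP t (int N + 1)) + smult (of_int (de t (int N)) * qi (int N)) (PP t (int N - 1))" for N
    by (rule PP_rec[OF t])
  show "qi (int N + 1) \<noteq> 0" for N using qi_ne[of "Suc N"] by (simp add: add.commute)
qed

lemma T_eq:
  assumes t: "t \<in> {0,1}"
  shows "T t (int N) = D (int N)"
proof (rule uniq[where lam="\<lambda>N. qi (int N + 1)" and mu="\<lambda>N. cc (int N)"])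
  show "T t (-1) = D (-1)" by (simp add: T_def D_def)
  show "T t 0 = D 0" by (simp add: T_def PP_def D_def Bcoef_0 Pcan_def Pprod_0 qfact_0)
  show "BB * T t (int N) = smult (qi (int N + 1)) (T t (int N + 1)) + smult (cc (int N)) (T t (int N - 1))" for N
    by (rule T_rec[OF t])
  show "BB * D (int N) = smult (qi (int N + 1)) (D (int N + 1)) + smult (cc (int N)) (D (int N - 1))" for N
    by (rule D_rec)
  show "qi (int N + 1) \<noteq> 0" for N using qi_ne[of "Suc N"] by (simp add: add.commute)
qed

lemma conv:
  fixes f :: "nat \<Rightarrow> Qq poly" and c :: "nat \<Rightarrow> Qq"
  shows "(\<Sum>m<nat (int n + 1). smult (c m) (if int n - 2 * int m < 0 then 0 else f (nat (int n - 2 * int m))))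
       = (\<Sum>m\<in>{0..n div 2}. smult (c m) (f (n - 2 * m)))"
proof -
  have "(\<Sum>m<nat (int n + 1). smult (c m) (if int n - 2 * int m < 0 then 0 else f (nat (int n - 2 * int m))))
      = (\<Sum>m\<in>{0..n div 2}. smult (c m) (if int n - 2 * int m < 0 then 0 else f (nat (int n - 2 * int m))))"
    by (rule sum.mono_neutral_right) auto
  also have "\<dots> = (\<Sum>m\<in>{0..n div 2}. smult (c m) (f (n - 2 * m)))"
    by (rule sum.cong) (auto simp: nat_diff_distrib nat_mult_distrib)
  finally show ?thesis .
qed


lemma de_delta: "t \<in> {0,1} \<Longrightarrow> de t (int n) = delta_eq t n"
proof -
  assume t: "t \<in> {0,1}"
  have "int n mod 2 = int (n mod 2)" by (simp add: of_nat_mod)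
  moreover have "t mod 2 = t" using t by auto
  ultimately show ?thesis by (simp add: de_def delta_eq_def)
qed

theorem theorem2p7:
  fixes t n :: nat
  assumes "t \<in> {0, 1}"
  shows "Pcan t n = (\<Sum>m\<in>{0..n div 2}.
            smult (qv powi (- (int m * (2 * int m + 1 - 2 * delta_eq t n))) / qpoch4 m)
                  (Delta (n - 2 * m)))
       \<and> Delta n = (\<Sum>m\<in>{0..n div 2}.
            smult ((-1) ^ m * qv powi (- (int m * (2 * (1 - delta_eq t n) + 1))) / qpoch4 m)
                  (Pcan t (n - 2 * m)))"
proof
  have "Pcan t n = PP t (int n)" by (simp add: PP_def)
  also have "\<dots> = S t (int n)" using S_eq[OF assms] by simp
  also have "\<dots> = (\<Sum>m\<in>{0..n div 2}. smult (Acoef (de t (int n)) m) (Delta (n - 2 * m)))"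
    unfolding S_def D_def by (rule conv)
  finally show "Pcan t n = (\<Sum>m\<in>{0..n div 2}.
            smult (qv powi (- (int m * (2 * int m + 1 - 2 * delta_eq t n))) / qpoch4 m)
                  (Delta (n - 2 * m)))"
    by (simp add: Acoef_def de_delta[OF assms])
next
  have "Delta n = D (int n)" by (simp add: D_def)
  also have "\<dots> = T t (int n)" using T_eq[OF assms] by simp
  also have "\<dots> = (\<Sum>m\<in>{0..n div 2}. smult (Bcoef (de t (int n)) m) (Pcan t (n - 2 * m)))"
    unfolding T_def PP_def by (rule conv)
  finally show "Delta n = (\<Sum>m\<in>{0..n div 2}.
            smult ((-1) ^ m * qv powi (- (int m * (2 * (1 - delta_eq t n) + 1))) / qpoch4 m)
                  (Pcan t (n - 2 * m)))"
    by (simp add: Bcoef_def de_delta[OF assms])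
qed

end
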